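(* If a propositional Hilbert-type calculus $\mathbf{C}$ is strictly analytic, then $\mathrm{MC}(\mathbf{C})=\mathrm{Thm}(\mathbf{C})$.
   Context: A propositional language has variables $X_1,X_2,\ldots$ and finitely many connectives with arities. The depth $\mathrm{dp}(A)$ of a formula is $0$ for variables and constants and $\max\{\mathrm{dp}(A_1),\ldots,\mathrm{dp}(A_n)\}+1$ for $A=\Box(A_1,\ldots,A_n)$. $\mathrm{Var}(A)$ is the set of variables in $A$. A substitution $\sigma$ maps variables to formulas; $F\sigma$ is the result of simultaneous replacement. A propositional Hilbert-type calculus $\mathbf{C}$ is given by a finite set of axioms and a finite set of rules (premises $A_1,\ldots,A_n$, conclusion $C$). A derivation is a finite sequence of formulas each of which is a substitution instance of an axiom or is $C\sigma$ for a rule and substitution $\sigma$ with all $A_j\sigma$ occurring earlier; $\mathrm{Thm}(\mathbf{C})$ is the set of derivable formulas. $\mathbf{C}$ is strictly analytic if for every rule with premises $A_1,\ldots,A_n$ and conclusion $C$, each $i$ satisfies $\mathrm{Var}(A_i)\subseteq\mathrm{Var}(C)$ and $\mathrm{dp}(A_i\sigma)\le\mathrm{dp}(C\sigma)$ for every substitution $\sigma$. A finite-valued logic $\mathbf{M}$ has a finite set of truth values, designated values, and a truth function per connective; valuations extend to formulas; a valuation satisfies $F$ if $F$ is designated; tautologies are formulas satisfied by all valuations. $\mathbf{M}$ is a cover for $\mathbf{C}$ if all axioms are tautologies of $\mathbf{M}$ and for every rule every valuation satisfying all premises satisfies the conclusion. $\mathrm{MC}(\mathbf{C})$ is the set of formulas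 that are tautologies of every finite-valued cover of $\mathbf{C}$. *)

theory Defs
  imports Main
begin

text \<open>Connectives are elements of a finite type 'c, each with an arity given by
  ar :: 'c => nat (constants are 0-ary connectives). Variables X_1, X_2, ... are
  represented by Var n, n :: nat.\<close>

datatype 'c form = Var nat | Op 'c "'c form list"

fun wf :: "('c \<Rightarrow> nat) \<Rightarrow> 'c form \<Rightarrow> bool" where
  "wf ar (Var n) = True"
| "wf ar (Op c As) = (length As = ar c \<and> (\<forall>A\<in>set As. wf ar A))"

fun dp :: "'c form \<Rightarrow> nat" where
  "dp (Var n) = 0"
| "dp (Op c As) = (if As = [] then 0 else Suc (Max (set (map dp As))))"

fun vars :: "'c form \<Rightarrow> nat set" where
  "vars (Var n) = {n}"
| "vars (Op c As) = (\<Union>A\<in>set As. vars A)"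

fun subst :: "(nat \<Rightarrow> 'c form) \<Rightarrow> 'c form \<Rightarrow> 'c form" where
  "subst \<sigma> (Var n) = \<sigma> n"
| "subst \<sigma> (Op c As) = Op c (map (subst \<sigma>) As)"

definition is_subst :: "('c \<Rightarrow> nat) \<Rightarrow> (nat \<Rightarrow> 'c form) \<Rightarrow> bool" where
  "is_subst ar \<sigma> \<longleftrightarrow> (\<forall>n. wf ar (\<sigma> n))"

text \<open>A calculus is a pair (axioms, rules); a rule is (premises, conclusion).\<close>

type_synonym 'c calculus = "'c form set \<times> ('c form list \<times> 'c form) set"

definition is_calculus :: "('c \<Rightarrow> nat) \<Rightarrow> 'c calculus \<Rightarrow> bool" where
  "is_calculus ar C \<longleftrightarrow> finite (fst C) \<and> finite (snd C) \<and>
     (\<forall>A\<in>fst C. wf ar A) \<and>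
     (\<forall>(Ps, Q)\<in>snd C. wf ar Q \<and> (\<forall>P\<in>set Ps. wf ar P))"

definition derivation :: "('c \<Rightarrow> nat) \<Rightarrow> 'c calculus \<Rightarrow> 'c form list \<Rightarrow> bool" where
  "derivation ar C ds \<longleftrightarrow>
     (\<forall>i < length ds.
        (\<exists>A \<in> fst C. \<exists>\<sigma>. is_subst ar \<sigma> \<and> ds ! i = subst \<sigma> A) \<or>
        (\<exists>(Ps, Q) \<in> snd C. \<exists>\<sigma>. is_subst ar \<sigma> \<and> ds ! i = subst \<sigma> Q \<and>
            (\<forall>P \<in> set Ps. \<exists>j < i. ds ! j = subst \<sigma> P)))"

definition Thm :: "('c \<Rightarrow> nat) \<Rightarrow> 'c calculus \<Rightarrow> 'c form set" where
  "Thm ar C = {F. \<exists>ds. derivation ar C ds \<and> F \<in> set ds}"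

definition strictly_analytic :: "('c \<Rightarrow> nat) \<Rightarrow> 'c calculus \<Rightarrow> bool" where
  "strictly_analytic ar C \<longleftrightarrow>
     (\<forall>(Ps, Q) \<in> snd C. \<forall>P \<in> set Ps.
        vars P \<subseteq> vars Q \<and>
        (\<forall>\<sigma>. is_subst ar \<sigma> \<longrightarrow> dp (subst \<sigma> P) \<le> dp (subst \<sigma> Q)))"

text \<open>Truth values are represented by a finite set of natural numbers (every finite
  set of truth values is isomorphic to one).\<close>

record 'c fvlogic =
  tvals :: "nat set"
  desig :: "nat set"
  tfun  :: "'c \<Rightarrow> nat list \<Rightarrow> nat"

definition is_fvlogic :: "('c \<Rightarrow> nat) \<Rightarrow> 'c fvlogic \<Rightarrow> bool" where
  "is_fvlogic ar M \<longleftrightarrow> finite (tvals M) \<and> tvals M \<noteq> {} \<and> desig M \<subseteq> tvals M \<and>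
     (\<forall>c xs. length xs = ar c \<and> set xs \<subseteq> tvals M \<longrightarrow> tfun M c xs \<in> tvals M)"

definition valuation :: "'c fvlogic \<Rightarrow> (nat \<Rightarrow> nat) \<Rightarrow> bool" where
  "valuation M v \<longleftrightarrow> (\<forall>n. v n \<in> tvals M)"

fun eval :: "'c fvlogic \<Rightarrow> (nat \<Rightarrow> nat) \<Rightarrow> 'c form \<Rightarrow> nat" where
  "eval M v (Var n) = v n"
| "eval M v (Op c As) = tfun M c (map (eval M v) As)"

definition satisfies :: "'c fvlogic \<Rightarrow> (nat \<Rightarrow> nat) \<Rightarrow> 'c form \<Rightarrow> bool" where
  "satisfies M v F \<longleftrightarrow> eval M v F \<in> desig M"

definition tautology :: "'c fvlogic \<Rightarrow> 'c form \<Rightarrow> bool" where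
  "tautology M F \<longleftrightarrow> (\<forall>v. valuation M v \<longrightarrow> satisfies M v F)"

definition cover :: "('c \<Rightarrow> nat) \<Rightarrow> 'c fvlogic \<Rightarrow> 'c calculus \<Rightarrow> bool" where
  "cover ar M C \<longleftrightarrow> is_fvlogic ar M \<and>
     (\<forall>A \<in> fst C. tautology M A) \<and>
     (\<forall>(Ps, Q) \<in> snd C. \<forall>v. valuation M v \<longrightarrow>
        (\<forall>P \<in> set Ps. satisfies M v P) \<longrightarrow> satisfies M v Q)"

definition MC :: "('c \<Rightarrow> nat) \<Rightarrow> 'c calculus \<Rightarrow> 'c form set" where
  "MC ar C = {F. wf ar F \<and> (\<forall>M. cover ar M C \<longrightarrow> tautology M F)}"

end

theory Submission
  imports Defs
begin

lemma finite_vars: "finite (vars A)"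
  by (induction A) auto

lemma subst_vars: "vars (subst \<sigma> A) = (\<Union>n\<in>vars A. vars (\<sigma> n))"
  by (induction A) auto

lemma wf_subst: "wf ar A \<Longrightarrow> (\<forall>n. wf ar (\<sigma> n)) \<Longrightarrow> wf ar (subst \<sigma> A)"
  by (induction A) auto

lemma subst_cong: "(\<forall>n\<in>vars A. \<sigma> n = \<tau> n) \<Longrightarrow> subst \<sigma> A = subst \<tau> A"
  by (induction A) auto

lemma subst_Var: "subst Var A = A"
  by (induction A) (auto intro: map_idI)

lemma dp_arg:
  assumes "A \<in> set As" shows "dp A \<le> dp (Op c As)"
proof -
  have "dp A \<le> Max (set (map dp As))" by (rule Max_ge) (auto simp: assms)
  moreover have "As \<noteq> []" using assms by auto
  ultimately show ?thesis by simp
qed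

lemma dp_Op_le:
  assumes "dp (Op c As) \<le> Suc k" "A \<in> set As" shows "dp A \<le> k"
proof -
  have "dp A \<le> Max (set (map dp As))" by (rule Max_ge) (auto simp: assms)
  moreover have "As \<noteq> []" using assms by auto
  ultimately show ?thesis using assms by simp
qed

lemma dp_Op_0: "dp (Op c As) = 0 \<Longrightarrow> As = []"
  by (cases "As = []") auto

lemma eval_subst: "eval M v (subst \<sigma> A) = eval M (\<lambda>n. eval M v (\<sigma> n)) A"
  by (induction A) (auto cong: map_cong)

lemma eval_tvals:
  assumes "is_fvlogic ar M" "valuation M v"
  shows "wf ar A \<Longrightarrow> eval M v A \<in> tvals M"
proof (induction A)
  case (Var n) then show ?case using assms by (simp add: valuation_def)
next
  case (Op c As)
  then have "set (map (eval M v) As) \<subseteq> tvals M" "length (map (eval M v) As) = ar c" by auto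
  then show ?case using assms(1) unfolding is_fvlogic_def by simp
qed

lemma satisfies_subst:
  "satisfies M v (subst \<sigma> A) = satisfies M (\<lambda>n. eval M v (\<sigma> n)) A"
  by (simp add: satisfies_def eval_subst)

lemma derivationE:
  assumes "derivation ar C ds" "i < length ds"
  obtains (ax) A \<sigma> where "A \<in> fst C" "is_subst ar \<sigma>" "ds ! i = subst \<sigma> A"
  | (ru) Ps Q \<sigma> where "(Ps, Q) \<in> snd C" "is_subst ar \<sigma>" "ds ! i = subst \<sigma> Q"
      "\<forall>P \<in> set Ps. \<exists>j < i. ds ! j = subst \<sigma> P"
proof -
  have "(\<exists>A \<in> fst C. \<exists>\<sigma>. is_subst ar \<sigma> \<and> ds ! i = subst \<sigma> A) \<or>
        (\<exists>(Ps, Q) \<in> snd C. \<exists>\<sigma>. is_subst ar \<sigma> \<and> ds ! i = subst \<sigma> Q \<and>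
            (\<forall>P \<in> set Ps. \<exists>j < i. ds ! j = subst \<sigma> P))"
    using assms(1)[unfolded derivation_def, rule_format, OF assms(2)] .
  then show thesis
  proof
    assume "\<exists>A \<in> fst C. \<exists>\<sigma>. is_subst ar \<sigma> \<and> ds ! i = subst \<sigma> A"
    then obtain A \<sigma> where "A \<in> fst C" "is_subst ar \<sigma>" "ds ! i = subst \<sigma> A" by blast
    then show thesis by (rule that(1))
  next
    assume "\<exists>(Ps, Q) \<in> snd C. \<exists>\<sigma>. is_subst ar \<sigma> \<and> ds ! i = subst \<sigma> Q \<and>
            (\<forall>P \<in> set Ps. \<exists>j < i. ds ! j = subst \<sigma> P)"
    then obtain x where x: "x \<in> snd C" "case x of (Ps, Q) \<Rightarrow> \<exists>\<sigma>. is_subst ar \<sigma> \<and> ds ! i = subst \<sigma> Q \<and>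
            (\<forall>P \<in> set Ps. \<exists>j < i. ds ! j = subst \<sigma> P)" by (rule bexE)
    obtain Ps Q where pq: "x = (Ps, Q)" by (cases x)
    from x(2) obtain \<sigma> where "is_subst ar \<sigma>" "ds ! i = subst \<sigma> Q"
        "\<forall>P \<in> set Ps. \<exists>j < i. ds ! j = subst \<sigma> P" unfolding pq by auto
    then show thesis using that(2) x(1) pq by blast
  qed
qed

lemma deriv_sound:
  assumes d: "derivation ar C ds" and cv: "cover ar M C" and calc: "is_calculus ar C"
  shows "i < length ds \<Longrightarrow> wf ar (ds!i) \<and> tautology M (ds!i)"
proof (induction i rule: less_induct)
  case (less i)
  have fv: "is_fvlogic ar M" using cv by (simp add: cover_def)
  have val: "valuation M (\<lambda>n. eval M v (\<sigma> n))" if "valuation M v" "is_subst ar \<sigma>" for v \<sigma>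
    using eval_tvals[OF fv that(1)] that(2) by (simp add: valuation_def is_subst_def)
  consider
    (ax) A \<sigma> where "A \<in> fst C" "is_subst ar \<sigma>" "ds ! i = subst \<sigma> A"
  | (ru) Ps Q \<sigma> where "(Ps, Q) \<in> snd C" "is_subst ar \<sigma>" "ds ! i = subst \<sigma> Q"
      "\<forall>P \<in> set Ps. \<exists>j < i. ds ! j = subst \<sigma> P"
    by (rule derivationE[OF d less.prems])
  then show ?case
  proof cases
    case ax
    have "wf ar A" using calc ax(1) by (auto simp: is_calculus_def)
    then have "wf ar (ds!i)" using ax wf_subst[of ar A \<sigma>] by (simp add: is_subst_def)
    moreover have "tautology M (ds!i)"
      unfolding tautology_def ax(3) satisfies_subst
    proof (intro allI impI)
      fix v assume "valuation M v"
      then have "valuation M (\<lambda>n. eval M v (\<sigma> n))" using val ax(2) by blast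
      moreover have "tautology M A" using cv ax(1) by (auto simp: cover_def)
      ultimately show "satisfies M (\<lambda>n. eval M v (\<sigma> n)) A" by (simp add: tautology_def)
    qed
    ultimately show ?thesis by blast
  next
    case ru
    have "wf ar Q" using calc ru(1) by (auto simp: is_calculus_def)
    then have "wf ar (ds!i)" using ru wf_subst[of ar Q \<sigma>] by (simp add: is_subst_def)
    moreover have "tautology M (ds!i)"
      unfolding tautology_def ru(3) satisfies_subst
    proof (intro allI impI)
      fix v assume v: "valuation M v"
      then have v': "valuation M (\<lambda>n. eval M v (\<sigma> n))" using val ru(2) by blast
      have rl: "\<forall>(Ps, Q)\<in>snd C. \<forall>v. valuation M v \<longrightarrow>
          (\<forall>P \<in> set Ps. satisfies M v P) \<longrightarrow> satisfies M v Q"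
        using cv by (simp add: cover_def)
      have rl2: "\<forall>v. valuation M v \<longrightarrow> (\<forall>P \<in> set Ps. satisfies M v P) \<longrightarrow> satisfies M v Q"
        using bspec[OF rl ru(1)] by simp
      have "satisfies M (\<lambda>n. eval M v (\<sigma> n)) P" if "P \<in> set Ps" for P
      proof -
        have "\<exists>j<i. ds ! j = subst \<sigma> P" using ru(4) that by (rule bspec)
        then obtain j where j: "j < i" "ds ! j = subst \<sigma> P" by (elim exE conjE)
        have "j < length ds" using j(1) less.prems by simp
        then have "tautology M (ds ! j)" using less.IH[OF j(1)] by blast
        then have "tautology M (subst \<sigma> P)" using j(2) by simp
        then show ?thesis using v by (simp add: tautology_def satisfies_subst)
      qed
      then show "satisfies M (\<lambda>n. eval M v (\<sigma> n)) Q"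
        using v' rl2 by blast
    qed
    ultimately show ?thesis by blast
  qed
qed

lemma just_axI:
  assumes "A \<in> fst C" "is_subst ar \<sigma>" "ds ! i = subst \<sigma> A"
  shows "(\<exists>A\<in>fst C. \<exists>\<sigma>. is_subst ar \<sigma> \<and> ds ! i = subst \<sigma> A) \<or>
    (\<exists>(Ps, Q)\<in>snd C. \<exists>\<sigma>. is_subst ar \<sigma> \<and> ds ! i = subst \<sigma> Q \<and>
       (\<forall>P\<in>set Ps. \<exists>j<i. ds ! j = subst \<sigma> P))"
  using assms by (intro disjI1 bexI[of _ A]) auto

lemma just_ruleI:
  assumes "(Ps, Q) \<in> snd C" "is_subst ar \<sigma>" "ds ! i = subst \<sigma> Q"
    "\<forall>P\<in>set Ps. \<exists>j<i. ds ! j = subst \<sigma> P"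
  shows "(\<exists>A\<in>fst C. \<exists>\<sigma>. is_subst ar \<sigma> \<and> ds ! i = subst \<sigma> A) \<or>
    (\<exists>(Ps, Q)\<in>snd C. \<exists>\<sigma>. is_subst ar \<sigma> \<and> ds ! i = subst \<sigma> Q \<and>
       (\<forall>P\<in>set Ps. \<exists>j<i. ds ! j = subst \<sigma> P))"
  using assms by (intro disjI2 bexI[of _ "(Ps, Q)"]) auto

lemma just_prefix:
  assumes d: "derivation ar C ds" and i: "i < length ds"
  shows "(\<exists>A\<in>fst C. \<exists>\<sigma>. is_subst ar \<sigma> \<and> (ds @ es) ! i = subst \<sigma> A) \<or>
    (\<exists>(Ps, Q)\<in>snd C. \<exists>\<sigma>. is_subst ar \<sigma> \<and> (ds @ es) ! i = subst \<sigma> Q \<and>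
       (\<forall>P\<in>set Ps. \<exists>j<i. (ds @ es) ! j = subst \<sigma> P))"
proof -
  have e: "(ds @ es) ! j = ds ! j" if "j \<le> i" for j using i that by (simp add: nth_append)
  consider
      (ax) A \<sigma> where "A \<in> fst C" "is_subst ar \<sigma>" "ds ! i = subst \<sigma> A"
    | (ru) Ps Q \<sigma> where "(Ps, Q) \<in> snd C" "is_subst ar \<sigma>" "ds ! i = subst \<sigma> Q"
        "\<forall>P \<in> set Ps. \<exists>j < i. ds ! j = subst \<sigma> P"
    by (rule derivationE[OF d i])
  then show ?thesis
  proof cases
    case ax then show ?thesis using e[of i] by (intro just_axI) auto
  next
    case ru
    have "\<forall>P\<in>set Ps. \<exists>j<i. (ds @ es) ! j = subst \<sigma> P"
    proof
      fix P assume "P \<in> set Ps"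
      have "\<exists>j<i. ds ! j = subst \<sigma> P" using ru(4) \<open>P \<in> set Ps\<close> by (rule bspec)
      then obtain j where "j < i" "ds ! j = subst \<sigma> P" by (elim exE conjE)
      then show "\<exists>j<i. (ds @ es) ! j = subst \<sigma> P" using e[of j] by (intro exI[of _ j]) auto
    qed
    then show ?thesis using ru e[of i] by (intro just_ruleI) auto
  qed
qed

lemma deriv_append:
  assumes d1: "derivation ar C ds1" and d2: "derivation ar C ds2"
  shows "derivation ar C (ds1 @ ds2)"
  unfolding derivation_def
proof (intro allI impI)
  fix i assume i: "i < length (ds1 @ ds2)"
  show "(\<exists>A \<in> fst C. \<exists>\<sigma>. is_subst ar \<sigma> \<and> (ds1 @ ds2) ! i = subst \<sigma> A) \<or>
        (\<exists>(Ps, Q) \<in> snd C. \<exists>\<sigma>. is_subst ar \<sigma> \<and> (ds1 @ ds2) ! i = subst \<sigma> Q \<and>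
            (\<forall>P \<in> set Ps. \<exists>j < i. (ds1 @ ds2) ! j = subst \<sigma> P))"
  proof (cases "i < length ds1")
    case True
    show ?thesis by (rule just_prefix[OF d1 True])
  next
    case False
    define k where "k = i - length ds1"
    have k: "k < length ds2" "i = length ds1 + k" using i False by (auto simp: k_def)
    have e: "(ds1 @ ds2) ! (length ds1 + j) = ds2 ! j" for j by (simp add: nth_append)
    consider
      (ax) A \<sigma> where "A \<in> fst C" "is_subst ar \<sigma>" "ds2 ! k = subst \<sigma> A"
    | (ru) Ps Q \<sigma> where "(Ps, Q) \<in> snd C" "is_subst ar \<sigma>" "ds2 ! k = subst \<sigma> Q"
        "\<forall>P \<in> set Ps. \<exists>j < k. ds2 ! j = subst \<sigma> P"
      by (rule derivationE[OF d2 k(1)])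
    then show ?thesis
    proof cases
      case ax then show ?thesis using k(2) e by (intro just_axI) auto
    next
      case ru
      have "\<forall>P \<in> set Ps. \<exists>j < i. (ds1 @ ds2) ! j = subst \<sigma> P"
      proof
        fix P assume "P \<in> set Ps"
        have "\<exists>j<k. ds2 ! j = subst \<sigma> P" using ru(4) \<open>P \<in> set Ps\<close> by (rule bspec)
        then obtain j where "j < k" "ds2 ! j = subst \<sigma> P" by (elim exE conjE)
        then show "\<exists>j < i. (ds1 @ ds2) ! j = subst \<sigma> P"
          using k(2) e[of j] by (intro exI[of _ "length ds1 + j"]) auto
      qed
      then show ?thesis using ru k(2) e by (intro just_ruleI) auto
    qed
  qed
qed

lemma deriv_snoc:
  assumes d: "derivation ar C ds" and r: "(Ps, Q) \<in> snd C" and s: "is_subst ar \<sigma>"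
    and p: "\<forall>P\<in>set Ps. subst \<sigma> P \<in> set ds"
  shows "derivation ar C (ds @ [subst \<sigma> Q])"
  unfolding derivation_def
proof (intro allI impI)
  fix i assume i: "i < length (ds @ [subst \<sigma> Q])"
  show "(\<exists>A \<in> fst C. \<exists>\<tau>. is_subst ar \<tau> \<and> (ds @ [subst \<sigma> Q]) ! i = subst \<tau> A) \<or>
        (\<exists>(Ps, Q') \<in> snd C. \<exists>\<tau>. is_subst ar \<tau> \<and> (ds @ [subst \<sigma> Q]) ! i = subst \<tau> Q' \<and>
            (\<forall>P \<in> set Ps. \<exists>j < i. (ds @ [subst \<sigma> Q]) ! j = subst \<tau> P))"
  proof (cases "i < length ds")
    case True
    show ?thesis by (rule just_prefix[OF d True])
  next
    case False
    then have ii: "i = length ds" using i by simp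
    have "\<forall>P \<in> set Ps. \<exists>j < i. (ds @ [subst \<sigma> Q]) ! j = subst \<sigma> P"
    proof
      fix P assume "P \<in> set Ps"
      then have "subst \<sigma> P \<in> set ds" using p by blast
      then obtain j where "j < length ds" "ds ! j = subst \<sigma> P" by (auto simp: in_set_conv_nth)
      then show "\<exists>j < i. (ds @ [subst \<sigma> Q]) ! j = subst \<sigma> P"
        using ii by (intro exI[of _ j]) (auto simp: nth_append)
    qed
    then show ?thesis using r s ii by (intro just_ruleI) auto
  qed
qed

lemma Thm_axiom:
  assumes "A \<in> fst C" "is_subst ar \<sigma>" shows "subst \<sigma> A \<in> Thm ar C"
proof -
  have "derivation ar C [subst \<sigma> A]" using assms unfolding derivation_def by auto
  then show ?thesis unfolding Thm_def by force
qed

lemma Thm_rule: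
  assumes r: "(Ps, Q) \<in> snd C" and s: "is_subst ar \<sigma>"
    and p: "\<forall>P\<in>set Ps. subst \<sigma> P \<in> Thm ar C"
  shows "subst \<sigma> Q \<in> Thm ar C"
proof -
  have "\<exists>ds. derivation ar C ds \<and> (\<forall>P\<in>set Ps'. subst \<sigma> P \<in> set ds)"
    if "set Ps' \<subseteq> set Ps" for Ps'
    using that
  proof (induction Ps')
    case Nil
    have "derivation ar C []" by (simp add: derivation_def)
    then show ?case by auto
  next
    case (Cons P Ps')
    then obtain ds where ds: "derivation ar C ds" "\<forall>P\<in>set Ps'. subst \<sigma> P \<in> set ds" by auto
    have "subst \<sigma> P \<in> Thm ar C" using Cons.prems p by auto
    then obtain es where es: "derivation ar C es" "subst \<sigma> P \<in> set es" by (auto simp: Thm_def)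
    have "derivation ar C (es @ ds)" using deriv_append es ds by blast
    then show ?case using es ds by auto
  qed
  then obtain ds where "derivation ar C ds" "\<forall>P\<in>set Ps. subst \<sigma> P \<in> set ds" by blast
  then have "derivation ar C (ds @ [subst \<sigma> Q])" using deriv_snoc r s by blast
  then show ?thesis unfolding Thm_def by force
qed

fun Tb :: "('c \<Rightarrow> nat) \<Rightarrow> nat set \<Rightarrow> nat \<Rightarrow> 'c form set" where
  "Tb ar V 0 = Var ` V \<union> (\<Union>c. {Op c []})"
| "Tb ar V (Suc k) = Var ` V \<union> (\<Union>c. Op c ` {As. set As \<subseteq> Tb ar V k \<and> length As = ar c})"

lemma finite_Tb:
  fixes ar :: "'c::finite \<Rightarrow> nat"
  assumes "finite V" shows "finite (Tb ar V k)"
  by (induction k) (auto simp: assms finite_lists_length_eq)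

lemma in_Tb: "wf ar A \<Longrightarrow> vars A \<subseteq> V \<Longrightarrow> dp A \<le> k \<Longrightarrow> A \<in> Tb ar V k"
proof (induction A arbitrary: k)
  case (Var n) then show ?case by (cases k) auto
next
  case (Op c As)
  show ?case
  proof (cases k)
    case 0 then show ?thesis using Op.prems dp_Op_0 by auto
  next
    case (Suc k')
    have "set As \<subseteq> Tb ar V k'"
    proof
      fix A assume A: "A \<in> set As"
      show "A \<in> Tb ar V k'"
        using Op.IH[OF A] Op.prems A dp_Op_le[of c As k' A] Suc by auto
    qed
    moreover have "length As = ar c" using Op.prems by simp
    ultimately have "Op c As \<in> Op c ` {As. set As \<subseteq> Tb ar V k' \<and> length As = ar c}"
      by (intro imageI) simp
    then show ?thesis unfolding Suc Tb.simps by blast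
  qed
qed


lemma completeness:
  fixes ar :: "'c::finite \<Rightarrow> nat" and C :: "'c calculus"
  assumes calc: "is_calculus ar C" and sa: "strictly_analytic ar C"
    and wfF: "wf ar F" and nF: "F \<notin> Thm ar C"
  shows "\<exists>M. cover ar M C \<and> \<not> tautology M F"
proof -
  define V where "V = vars F"
  define d where "d = dp F"
  define S where "S = {A. wf ar A \<and> vars A \<subseteq> V \<and> dp A \<le> d}"
  have "S \<subseteq> Tb ar V d" unfolding S_def using in_Tb by blast
  then have finS: "finite S" using finite_Tb[of V ar d] finite_vars[of F] V_def finite_subset by blast
  define N where "N = card S"
  obtain f where bij: "bij_betw f {0..<N} S" using ex_bij_betw_nat_finite[OF finS] N_def by blast
  define g where "g = inv_into {0..<N} f"
  have fg: "\<And>x. x \<in> S \<Longrightarrow> f (g x) = x" unfolding g_def using bij bij_betw_inv_into_right by fast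
  have gS: "\<And>x. x \<in> S \<Longrightarrow> g x < N" unfolding g_def
    using bij bij_betw_def inv_into_into by (metis atLeastLessThan_iff)
  have fS: "\<And>x. x < N \<Longrightarrow> f x \<in> S" using bij bij_betwE by fastforce
  have gf: "\<And>x. x < N \<Longrightarrow> g (f x) = x" unfolding g_def
    using bij bij_betw_inv_into_left by fastforce
  define tf where "tf = (\<lambda>c xs. if length xs = ar c \<and> (\<forall>x\<in>set xs. x < N) \<and> Op c (map f xs) \<in> S
      then g (Op c (map f xs)) else N)"
  define M :: "'c fvlogic" where
    "M = \<lparr>tvals = {0..N}, desig = {i. i < N \<and> f i \<in> Thm ar C} \<union> {N}, tfun = tf\<rparr>"
  define sg :: "(nat \<Rightarrow> nat) \<Rightarrow> nat \<Rightarrow> 'c form" where "sg = (\<lambda>v n. if v n < N then f (v n) else (Var 0 :: 'c form))"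
  define cond where "cond = (\<lambda>v A. (\<forall>n\<in>vars A. v n < N) \<and> subst (sg v) A \<in> S)"
  have sgwf: "is_subst ar (sg v)" for v
    unfolding is_subst_def sg_def using fS unfolding S_def by auto
  have key: "eval M v A = (if cond v A then g (subst (sg v) A) else N)"
    if "wf ar A" "\<forall>n. v n \<le> N" for v A
    using that
  proof (induction A)
    case (Var n)
    show ?case
    proof (cases "v n < N")
      case True
      then show ?thesis using fS gf by (simp add: cond_def sg_def M_def)
    next
      case False
      then have "v n = N" using Var.prems le_less by blast
      then show ?thesis by (simp add: cond_def M_def)
    qed
  next
    case (Op c As)
    have len: "length As = ar c" and wfs: "\<And>A. A \<in> set As \<Longrightarrow> wf ar A" using Op.prems by auto
    have IH: "\<And>A. A \<in> set As \<Longrightarrow> eval M v A = (if cond v A then g (subst (sg v) A) else N)"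
      using Op.IH wfs Op.prems(2) by blast
    have ev: "eval M v (Op c As) = tf c (map (eval M v) As)" by (simp add: M_def)
    show ?case
    proof (cases "cond v (Op c As)")
      case True
      have cA: "cond v A" if A: "A \<in> set As" for A
      proof -
        have "\<forall>n\<in>vars A. v n < N" using True A unfolding cond_def by auto
        moreover have "subst (sg v) A \<in> S"
        proof -
          have "wf ar (subst (sg v) A)" using wf_subst wfs[OF A] sgwf unfolding is_subst_def by blast
          moreover have "vars (subst (sg v) A) \<subseteq> V"
            using True A unfolding cond_def S_def by auto
          moreover have "dp (subst (sg v) A) \<le> d"
          proof -
            have "dp (subst (sg v) A) \<le> dp (Op c (map (subst (sg v)) As))"
              using A by (intro dp_arg) auto
            then show ?thesis using True unfolding cond_def S_def by auto
          qed
          ultimately show ?thesis unfolding S_def by blast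
        qed
        ultimately show ?thesis unfolding cond_def by blast
      qed
      then have m: "map (eval M v) As = map (\<lambda>A. g (subst (sg v) A)) As" using IH by auto
      have lt: "\<forall>x\<in>set (map (eval M v) As). x < N" using m cA gS unfolding cond_def by auto
      have mf: "map f (map (eval M v) As) = map (subst (sg v)) As"
        using m cA fg unfolding cond_def by auto
      have "Op c (map (subst (sg v)) As) \<in> S" using True unfolding cond_def by simp
      then show ?thesis unfolding ev tf_def mf using len lt True by simp
    next
      case False
      have "tf c (map (eval M v) As) = N"
      proof (rule ccontr)
        assume ne: "tf c (map (eval M v) As) \<noteq> N"
        then have h: "\<forall>x\<in>set (map (eval M v) As). x < N" "Op c (map f (map (eval M v) As)) \<in> S"
          unfolding tf_def by (auto split: if_splits)
        have cA: "cond v A" if A: "A \<in> set As" for A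
          using h(1) A IH[OF A] by (auto split: if_splits)
        then have eqm: "map f (map (eval M v) As) = map (subst (sg v)) As"
          using IH fg unfolding cond_def by auto
        from h(2) have "Op c (map (subst (sg v)) As) \<in> S" unfolding eqm .
        then have "subst (sg v) (Op c As) \<in> S" by simp
        moreover have "\<forall>n\<in>vars (Op c As). v n < N" using cA unfolding cond_def by auto
        ultimately show False using False unfolding cond_def by blast
      qed
      then show ?thesis using ev False by simp
    qed
  qed
  have valM: "valuation M v \<longleftrightarrow> (\<forall>n. v n \<le> N)" for v
    by (simp add: valuation_def M_def)
  have des: "satisfies M v A \<longleftrightarrow> eval M v A = N \<or> (eval M v A < N \<and> f (eval M v A) \<in> Thm ar C)" for v A
    by (auto simp: satisfies_def M_def)
  have fvl: "is_fvlogic ar M"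
    unfolding is_fvlogic_def M_def tf_def using gS by (auto intro: less_imp_le)
  have axs: "tautology M A" if A: "A \<in> fst C" for A
    unfolding tautology_def
  proof (intro allI impI)
    fix v assume "valuation M v"
    then have vb: "\<forall>n. v n \<le> N" using valM by blast
    have wA: "wf ar A" using calc A by (auto simp: is_calculus_def)
    show "satisfies M v A"
    proof (cases "cond v A")
      case True
      have "subst (sg v) A \<in> Thm ar C" using Thm_axiom[OF A sgwf] .
      then show ?thesis using key[OF wA vb] True des gS fg unfolding cond_def by auto
    next
      case False
      then show ?thesis using key[OF wA vb] des by simp
    qed
  qed
  have rls: "satisfies M v Q" if r: "(Ps, Q) \<in> snd C" and v: "valuation M v"
      and ps: "\<forall>P\<in>set Ps. satisfies M v P" for Ps Q v
  proof -
    have vb: "\<forall>n. v n \<le> N" using valM v by blast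
    have wQ: "wf ar Q" and wP: "\<And>P. P \<in> set Ps \<Longrightarrow> wf ar P"
      using calc r by (auto simp: is_calculus_def)
    show ?thesis
    proof (cases "cond v Q")
      case False
      then show ?thesis using key[OF wQ vb] des by simp
    next
      case True
      have "subst (sg v) P \<in> Thm ar C" if P: "P \<in> set Ps" for P
      proof -
        have vs: "vars P \<subseteq> vars Q" and dps: "dp (subst (sg v) P) \<le> dp (subst (sg v) Q)"
          using sa r P sgwf unfolding strictly_analytic_def by fastforce+
        have c1: "\<forall>n\<in>vars P. v n < N" using True vs unfolding cond_def by auto
        have "subst (sg v) P \<in> S"
        proof -
          have "wf ar (subst (sg v) P)" using wf_subst wP[OF P] sgwf unfolding is_subst_def by blast
          moreover have "vars (subst (sg v) P) \<subseteq> V"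
          proof -
            have "vars (subst (sg v) P) \<subseteq> vars (subst (sg v) Q)" using vs by (auto simp: subst_vars)
            then show ?thesis using True unfolding cond_def S_def by auto
          qed
          moreover have "dp (subst (sg v) P) \<le> d" using dps True unfolding cond_def S_def by auto
          ultimately show ?thesis unfolding S_def by blast
        qed
        then have cP: "cond v P" using c1 unfolding cond_def by blast
        have "satisfies M v P" using ps P by blast
        then show ?thesis using key[OF wP[OF P] vb] cP des gS fg unfolding cond_def by auto
      qed
      then have "subst (sg v) Q \<in> Thm ar C" using Thm_rule[OF r sgwf] by blast
      then show ?thesis using key[OF wQ vb] True des gS fg unfolding cond_def by auto
    qed
  qed
  have cov: "cover ar M C" unfolding cover_def using fvl axs rls by blast
  define v0 where "v0 = (\<lambda>n. if n \<in> V then g (Var n) else N)"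
  have VarS: "n \<in> V \<Longrightarrow> Var n \<in> S" for n unfolding S_def by simp
  have v0val: "valuation M v0" unfolding valM v0_def using gS VarS by (auto intro: less_imp_le)
  have sgv0: "\<forall>n\<in>vars F. sg v0 n = Var n" unfolding sg_def v0_def using gS VarS fg V_def by auto
  then have sF: "subst (sg v0) F = F" using subst_cong[OF sgv0] subst_Var by metis
  have FS: "F \<in> S" unfolding S_def V_def d_def using wfF by simp
  have "cond v0 F" unfolding cond_def sF using FS gS VarS v0_def V_def by auto
  then have eF: "eval M v0 F = g F" using key[OF wfF v0val[unfolded valM]] sF by simp
  have "\<not> satisfies M v0 F" unfolding des eF using gS[OF FS] fg[OF FS] nF by auto
  then have "\<not> tautology M F" using v0val unfolding tautology_def by blast
  then show ?thesis using cov by blast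
qed

lemma deriv_wf:
  assumes "derivation ar C ds" "is_calculus ar C" "i < length ds"
  shows "wf ar (ds ! i)"
proof -
  consider
      (ax) A \<sigma> where "A \<in> fst C" "is_subst ar \<sigma>" "ds ! i = subst \<sigma> A"
    | (ru) Ps Q \<sigma> where "(Ps, Q) \<in> snd C" "is_subst ar \<sigma>" "ds ! i = subst \<sigma> Q"
    by (rule derivationE[OF assms(1,3)])
  then show ?thesis
  proof cases
    case ax then show ?thesis using assms(2) wf_subst[of ar A \<sigma>] unfolding is_calculus_def is_subst_def by auto
  next
    case ru
    have "wf ar Q" using assms(2) ru(1) unfolding is_calculus_def by auto
    then show ?thesis using wf_subst[of ar Q \<sigma>] ru unfolding is_subst_def by simp
  qed
qed

theorem corollary4:
  fixes ar :: "'c::finite \<Rightarrow> nat" and C :: "'c calculus"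
  assumes "is_calculus ar C"
    and "strictly_analytic ar C"
  shows "MC ar C = Thm ar C"
proof
  show "MC ar C \<subseteq> Thm ar C"
  proof
    fix F assume F: "F \<in> MC ar C"
    show "F \<in> Thm ar C"
    proof (rule ccontr)
      assume "F \<notin> Thm ar C"
      then obtain M where "cover ar M C" "\<not> tautology M F"
        using completeness[OF assms] F unfolding MC_def by blast
      then show False using F unfolding MC_def by blast
    qed
  qed
next
  show "Thm ar C \<subseteq> MC ar C"
  proof
    fix F assume "F \<in> Thm ar C"
    then obtain ds where ds: "derivation ar C ds" "F \<in> set ds" unfolding Thm_def by blast
    then obtain i where i: "i < length ds" "ds ! i = F" by (auto simp: in_set_conv_nth)
    have "wf ar F" using deriv_wf[OF ds(1) assms(1) i(1)] i(2) by simp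
    moreover have "tautology M F" if "cover ar M C" for M
      using deriv_sound[OF ds(1) that assms(1) i(1)] i(2) by simp
    ultimately show "F \<in> MC ar C" unfolding MC_def by blast
  qed
qed

end
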